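(* Let $X_0, \dots, X_{T-1}$ be a binary sequence decomposing into alternating blocks $1^{L_1}0^{G_1}\cdots 1^{L_m}0^{G_m}$, with $\rho = T^{-1}\sum_t X_t$ and $q = m/T$. For a word $w \in \{0,1\}^\ell$ let $\nu(w) = \frac{1}{T-\ell+1}\sum_{t=0}^{T-\ell}\prod_{j=0}^{\ell-1}\mathbf{1}[X_{t+j} = w_j]$. Then there are fixed affine-linear functions $F_w$ ($w \in \{0,1\}^4$), independent of the sequence, such that for every $w \in \{0,1\}^4$, \[ \nu(w) = F_w\bigl(\rho, q, \nu(000), \nu(010), \nu(0000), \nu(0010), \nu(0100), \nu(0110)\bigr) + o(1) \] as $T \to \infty$. That is, beyond the depth-$4$ parameters $(\rho, q, \nu(000), \nu(010))$, the sixteen $4$-word frequencies involve exactly the four new free parameters $\nu(0000), \nu(0010), \nu(0100), \nu(0110)$, for a total of $8$ parameters through depth $5$. *)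

theory Defs
  imports Complex_Main
begin

text \<open>Binary sequences are bool lists (True = 1, False = 0), indexed from 0.\<close>

definition block_seq :: "nat \<Rightarrow> (nat \<Rightarrow> nat) \<Rightarrow> (nat \<Rightarrow> nat) \<Rightarrow> bool list" where
  "block_seq m L G = concat (map (\<lambda>i. replicate (L i) True @ replicate (G i) False) [0..<m])"

definition rho :: "bool list \<Rightarrow> real" where
  "rho xs = (\<Sum>t<length xs. if xs ! t then 1 else 0) / real (length xs)"

definition nu :: "bool list \<Rightarrow> bool list \<Rightarrow> real" where
  "nu xs w = (\<Sum>t\<in>{0..int (length xs) - int (length w)}.
                 \<Prod>j<length w. if xs ! (nat t + j) = w ! j then 1 else 0)
             / (real (length xs) - real (length w) + 1)"

definition params :: "bool list \<Rightarrow> nat \<Rightarrow> real list" where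
  "params xs m = [rho xs, real m / real (length xs),
     nu xs [False,False,False], nu xs [False,True,False],
     nu xs [False,False,False,False], nu xs [False,False,True,False],
     nu xs [False,True,False,False], nu xs [False,True,True,False]]"

end

theory Submission
  imports Defs "HOL-Library.Sublist"
begin

fun cnt :: "bool list \<Rightarrow> bool list \<Rightarrow> nat" where
  "cnt w [] = (if w = [] then 1 else 0)"
| "cnt w (x # xs) = (if prefix w (x # xs) then 1 else 0) + cnt w xs"

lemma cnt_L:
  "cnt u xs = cnt (False # u) xs + cnt (True # u) xs + (if prefix u xs then 1 else 0)"
proof (induction xs)
  case Nil
  then show ?case by simp
next
  case (Cons x xs)
  then show ?case by (cases x) auto
qed

lemma prefix_snoc_cases:
  "prefix u s \<longleftrightarrow> prefix (u @ [False]) s \<or> prefix (u @ [True]) s \<or> s = u"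
proof
  assume "prefix u s"
  then obtain zs where s: "s = u @ zs" by (auto simp: prefix_def)
  show "prefix (u @ [False]) s \<or> prefix (u @ [True]) s \<or> s = u"
  proof (cases zs)
    case Nil
    then show ?thesis using s by simp
  next
    case (Cons b z)
    then have "prefix (u @ [b]) s" using s unfolding prefix_def by auto
    then show ?thesis by (cases b) auto
  qed
next
  assume "prefix (u @ [False]) s \<or> prefix (u @ [True]) s \<or> s = u"
  then show "prefix u s" unfolding prefix_def by auto
qed

lemma cnt_R:
  "cnt u xs = cnt (u @ [False]) xs + cnt (u @ [True]) xs + (if suffix u xs then 1 else 0)"
proof (induction xs)
  case Nil
  then show ?case by (simp add: suffix_def)
next
  case (Cons x xs)
  let ?s = "x # xs"
  have ex: "\<not> (prefix (u @ [False]) ?s \<and> prefix (u @ [True]) ?s)"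
    unfolding prefix_def by auto
  have ex2: "\<not> (prefix (u @ [b]) ?s \<and> ?s = u)" for b
    by (auto dest: prefix_length_le)
  have suf: "suffix u ?s \<longleftrightarrow> u = ?s \<or> suffix u xs"
    by (auto simp: suffix_def Cons_eq_append_conv)
  have ex3: "\<not> (u = ?s \<and> suffix u xs)"
    using suffix_length_le by fastforce
  have i1: "(if prefix u ?s then 1 else 0) = (if prefix (u @ [False]) ?s then 1 else 0)
      + (if prefix (u @ [True]) ?s then 1 else 0) + (if ?s = u then 1 else (0::nat))"
    using prefix_snoc_cases[of u ?s] ex ex2[of False] ex2[of True] by auto
  have i2: "(if suffix u ?s then 1 else 0) = (if ?s = u then 1 else 0) + (if suffix u xs then 1 else (0::nat))"
    using suf ex3 by auto
  have "cnt u ?s = (if prefix u ?s then 1 else 0) + cnt u xs" by simp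
  moreover have "cnt (u @ [False]) ?s = (if prefix (u @ [False]) ?s then 1 else 0) + cnt (u @ [False]) xs" by simp
  moreover have "cnt (u @ [True]) ?s = (if prefix (u @ [True]) ?s then 1 else 0) + cnt (u @ [True]) xs" by simp
  ultimately show ?case using Cons.IH i1 i2 by linarith
qed

lemma cnt_Nil_word: "cnt [] xs = length xs + 1"
  by (induction xs) auto

lemma cnt_long: "length xs < length w \<Longrightarrow> cnt w xs = 0"
  by (induction xs) (auto dest: prefix_length_le)

lemma cnt_le: "length w \<le> length xs \<Longrightarrow> cnt w xs + length w \<le> length xs + 1"
proof (induction xs)
  case Nil
  then show ?case by simp
next
  case (Cons x xs)
  show ?case
  proof (cases "length w \<le> length xs")
    case True
    then show ?thesis using Cons by simp
  next
    case False
    then show ?thesis using Cons.prems cnt_long[of xs w] by simp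
  qed
qed

lemma cnt_sum: "cnt w xs = (\<Sum>t\<le>length xs. if prefix w (drop t xs) then 1 else 0)"
proof (induction xs)
  case Nil
  then show ?case by simp
next
  case (Cons x xs)
  show ?case
    by (simp only: cnt.simps Cons.IH length_Cons sum.atMost_Suc_shift drop_0 drop_Suc_Cons)
qed

lemma prod_ind:
  fixes xs w :: "bool list"
  assumes "t + length w \<le> length xs"
  shows "(\<Prod>j<length w. if xs ! (t + j) = w ! j then 1 else 0 :: real)
       = (if prefix w (drop t xs) then 1 else 0)"
proof -
  have pre: "prefix w (drop t xs) \<longleftrightarrow> (\<forall>j<length w. xs ! (t + j) = w ! j)"
  proof
    assume "prefix w (drop t xs)"
    then obtain zs where "drop t xs = w @ zs" by (auto simp: prefix_def)
    then show "\<forall>j<length w. xs ! (t + j) = w ! j"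
      using assms by (metis le_add1 le_trans nth_append nth_drop)
  next
    assume H: "\<forall>j<length w. xs ! (t + j) = w ! j"
    have "take (length w) (drop t xs) = w"
      using assms H by (intro nth_equalityI) auto
    then show "prefix w (drop t xs)"
      by (metis take_is_prefix)
  qed
  show ?thesis
  proof (cases "prefix w (drop t xs)")
    case True
    then show ?thesis using pre by (simp add: prod.neutral)
  next
    case False
    then obtain j where "j < length w" "xs ! (t + j) \<noteq> w ! j" using pre by auto
    then show ?thesis using False by (intro trans[OF prod_zero]) auto
  qed
qed

lemma nu_cnt:
  assumes "length w \<le> length xs" "w \<noteq> []"
  shows "nu xs w = real (cnt w xs) / (real (length xs) - real (length w) + 1)"
proof -
  let ?T = "length xs" and ?l = "length w"
  have I: "{0..int ?T - int ?l} = int ` {0..?T - ?l}"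
    using assms by (simp add: image_int_atLeastAtMost of_nat_diff)
  have "(\<Sum>t\<in>{0..int ?T - int ?l}. \<Prod>j<?l. if xs ! (nat t + j) = w ! j then 1 else 0 :: real)
      = (\<Sum>t\<in>{0..?T - ?l}. \<Prod>j<?l. if xs ! (t + j) = w ! j then 1 else 0 :: real)"
    unfolding I by (subst sum.reindex) (auto simp: inj_on_def)
  also have "\<dots> = (\<Sum>t\<in>{0..?T - ?l}. if prefix w (drop t xs) then 1 else 0 :: real)"
    using assms by (intro sum.cong refl prod_ind) auto
  also have "\<dots> = (\<Sum>t\<le>?T. if prefix w (drop t xs) then 1 else 0 :: real)"
  proof (rule sum.mono_neutral_left)
    show "\<forall>i\<in>{..?T} - {0..?T - ?l}. (if prefix w (drop i xs) then 1 else 0 :: real) = 0"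
      using assms by (auto dest!: prefix_length_le)
  qed auto
  also have "\<dots> = real (cnt w xs)"
    unfolding cnt_sum of_nat_sum by (intro sum.cong) auto
  finally show ?thesis by (simp add: nu_def)
qed

lemma nu_small:
  assumes "length xs < length w"
  shows "nu xs w = 0"
  using assms by (simp add: nu_def)

lemma rho_cnt: "rho xs = real (cnt [True] xs) / real (length xs)"
proof -
  have "(\<Sum>t<length xs. if xs ! t then 1 else 0 :: real) = real (cnt [True] xs)"
    by (induction xs) (simp_all del: sum.lessThan_Suc add: sum.lessThan_Suc_shift)
  then show ?thesis by (simp add: rho_def)
qed

lemma cnt10_falses: "cnt [True, False] (replicate b False @ ys) = cnt [True, False] ys"
  by (induction b) auto

lemma cnt10_trues: "a \<ge> 1 \<Longrightarrow> cnt [True, False] (replicate a True @ False # zs) = 1 + cnt [True, False] (False # zs)"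
proof (induction a rule: dec_induct)
  case base
  then show ?case by simp
next
  case (step n)
  then show ?case by (cases n) auto
qed

lemma cnt_block: "(\<forall>i<m. 1 \<le> L i \<and> 1 \<le> G i) \<Longrightarrow> cnt [True, False] (block_seq m L G) = m"
proof (induction m arbitrary: L G)
  case 0
  then show ?case by (simp add: block_seq_def)
next
  case (Suc m)
  have bs: "block_seq (Suc m) L G = (replicate (L 0) True @ replicate (G 0) False) @ block_seq m (L \<circ> Suc) (G \<circ> Suc)"
    unfolding block_seq_def by (simp add: upt_conv_Cons map_Suc_upt[symmetric] comp_def del: upt_Suc)
  have IH: "cnt [True, False] (block_seq m (L \<circ> Suc) (G \<circ> Suc)) = m"
    using Suc by (intro Suc.IH) auto
  obtain g where g: "G 0 = Suc g" proof -
    have "1 \<le> G 0" using Suc.prems by auto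
    then show ?thesis using that by (cases "G 0") auto
  qed
  have "L 0 \<ge> 1" using Suc.prems by auto
  then show ?case unfolding bs using IH g cnt10_trues cnt10_falses
    by (simp del: replicate_Suc add: replicate_Suc[of g] cnt10_falses)
qed

definition pw :: "bool list list" where
  "pw = [[True], [True,False], [False,False,False], [False,True,False],
         [False,False,False,False], [False,False,True,False], [False,True,False,False], [False,True,True,False]]"

definition tbl :: "bool list \<Rightarrow> real list" where
  "tbl w = (if w = [False,False,False,False] then [(0), (0), (0), (0), (0), (1), (0), (0), (0)] else
    if w = [False,False,False,True] then [(0), (0), (0), (1), (0), (-1), (0), (0), (0)] else
    if w = [False,False,True,False] then [(0), (0), (0), (0), (0), (0), (1), (0), (0)] else
    if w = [False,False,True,True] then [(1), (-1), (-1), (-1), (0), (0), (-1), (0), (0)] else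
    if w = [False,True,False,False] then [(0), (0), (0), (0), (0), (0), (0), (1), (0)] else
    if w = [False,True,False,True] then [(0), (0), (0), (0), (1), (0), (0), (-1), (0)] else
    if w = [False,True,True,False] then [(0), (0), (0), (0), (0), (0), (0), (0), (1)] else
    if w = [False,True,True,True] then [(0), (0), (1), (0), (-1), (0), (0), (0), (-1)] else
    if w = [True,False,False,False] then [(0), (0), (0), (1), (0), (-1), (0), (0), (0)] else
    if w = [True,False,False,True] then [(1), (-1), (-1), (-2), (0), (1), (0), (0), (0)] else
    if w = [True,False,True,False] then [(0), (0), (0), (0), (1), (0), (-1), (0), (0)] else
    if w = [True,False,True,True] then [(-1), (1), (2), (1), (-1), (0), (1), (0), (0)] else
    if w = [True,True,False,False] then [(1), (-1), (-1), (-1), (0), (0), (0), (-1), (0)] else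
    if w = [True,True,False,True] then [(-1), (1), (2), (1), (-1), (0), (0), (1), (0)] else
    if w = [True,True,True,False] then [(0), (0), (1), (0), (-1), (0), (0), (0), (-1)] else
    if w = [True,True,True,True] then [(0), (1), (-3), (0), (2), (0), (0), (0), (1)] else
    [0,0,0,0,0,0,0,0,0])"

lemma sum8: "(\<Sum>i<(8::nat). f i) = f 0 + f 1 + f 2 + f 3 + f 4 + f 5 + f 6 + (f 7 :: real)"
  by (simp add: eval_nat_numeral)

context
  fixes C :: "bool list \<Rightarrow> real" and T :: real
  assumes R: "\<And>u. length u \<le> 3 \<Longrightarrow> C (u @ [False]) + C (u @ [True]) \<le> C u \<and> C u \<le> C (u @ [False]) + C (u @ [True]) + 1"
  and L: "\<And>u. length u \<le> 3 \<Longrightarrow> C (False # u) + C (True # u) \<le> C u \<and> C u \<le> C (False # u) + C (True # u) + 1"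
  and E: "C [] = T + 1"
begin

lemma key_0000:
  "\<bar>C [False,False,False,False] - (tbl [False,False,False,False] ! 0 * T + (\<Sum>i<8. tbl [False,False,False,False] ! Suc i * C (pw ! i)))\<bar> \<le> 10 \<and>
   \<bar>tbl [False,False,False,False] ! 0\<bar> \<le> 1 \<and> (\<Sum>i<8. \<bar>tbl [False,False,False,False] ! Suc i\<bar>) \<le> 7"
proof -
  have t: "tbl [False,False,False,False] = [(0), (0), (0), (0), (0), (1), (0), (0), (0)]" by (simp add: tbl_def)
  have i: "C [False,False,False,False] - ((0) * T + ((0) * C [True] + (0) * C [True,False] + (0) * C [False,False,False] + (0) * C [False,True,False] + (1) * C [False,False,False,False] + (0) * C [False,False,True,False] + (0) * C [False,True,False,False] + (0) * C [False,True,True,False])) = (0)" unfolding id_def using E by (simp add: algebra_simps)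
  have l: "C [False,False,False,False] - ((0) * T + ((0) * C [True] + (0) * C [True,False] + (0) * C [False,False,False] + (0) * C [False,True,False] + (1) * C [False,False,False,False] + (0) * C [False,False,True,False] + (0) * C [False,True,False,False] + (0) * C [False,True,True,False])) \<le> 10" "C [False,False,False,False] - ((0) * T + ((0) * C [True] + (0) * C [True,False] + (0) * C [False,False,False] + (0) * C [False,True,False] + (1) * C [False,False,False,False] + (0) * C [False,False,True,False] + (0) * C [False,True,False,False] + (0) * C [False,True,True,False])) \<ge> -10" using i  by linarith+
  then show ?thesis by (simp add: t pw_def sum8 abs_le_iff)
qed

lemma key_0001:
  "\<bar>C [False,False,False,True] - (tbl [False,False,False,True] ! 0 * T + (\<Sum>i<8. tbl [False,False,False,True] ! Suc i * C (pw ! i)))\<bar> \<le> 10 \<and>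
   \<bar>tbl [False,False,False,True] ! 0\<bar> \<le> 1 \<and> (\<Sum>i<8. \<bar>tbl [False,False,False,True] ! Suc i\<bar>) \<le> 7"
proof -
  have t: "tbl [False,False,False,True] = [(0), (0), (0), (1), (0), (-1), (0), (0), (0)]" by (simp add: tbl_def)
  define e0 where "e0 = C [False,False,False] - C [False,False,False,False] - C [False,False,False,True]"
  have b0: "0 \<le> e0 \<and> e0 \<le> 1" using R[of "[False,False,False]"] unfolding e0_def by simp
  have i: "C [False,False,False,True] - ((0) * T + ((0) * C [True] + (0) * C [True,False] + (1) * C [False,False,False] + (0) * C [False,True,False] + (-1) * C [False,False,False,False] + (0) * C [False,False,True,False] + (0) * C [False,True,False,False] + (0) * C [False,True,True,False])) = (0) + (-1) * e0" unfolding e0_def using E by (simp add: algebra_simps)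
  have l: "C [False,False,False,True] - ((0) * T + ((0) * C [True] + (0) * C [True,False] + (1) * C [False,False,False] + (0) * C [False,True,False] + (-1) * C [False,False,False,False] + (0) * C [False,False,True,False] + (0) * C [False,True,False,False] + (0) * C [False,True,True,False])) \<le> 10" "C [False,False,False,True] - ((0) * T + ((0) * C [True] + (0) * C [True,False] + (1) * C [False,False,False] + (0) * C [False,True,False] + (-1) * C [False,False,False,False] + (0) * C [False,False,True,False] + (0) * C [False,True,False,False] + (0) * C [False,True,True,False])) \<ge> -10" using i b0 by linarith+
  then show ?thesis by (simp add: t pw_def sum8 abs_le_iff)
qed

lemma key_0010:
  "\<bar>C [False,False,True,False] - (tbl [False,False,True,False] ! 0 * T + (\<Sum>i<8. tbl [False,False,True,False] ! Suc i * C (pw ! i)))\<bar> \<le> 10 \<and>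
   \<bar>tbl [False,False,True,False] ! 0\<bar> \<le> 1 \<and> (\<Sum>i<8. \<bar>tbl [False,False,True,False] ! Suc i\<bar>) \<le> 7"
proof -
  have t: "tbl [False,False,True,False] = [(0), (0), (0), (0), (0), (0), (1), (0), (0)]" by (simp add: tbl_def)
  have i: "C [False,False,True,False] - ((0) * T + ((0) * C [True] + (0) * C [True,False] + (0) * C [False,False,False] + (0) * C [False,True,False] + (0) * C [False,False,False,False] + (1) * C [False,False,True,False] + (0) * C [False,True,False,False] + (0) * C [False,True,True,False])) = (0)" unfolding id_def using E by (simp add: algebra_simps)
  have l: "C [False,False,True,False] - ((0) * T + ((0) * C [True] + (0) * C [True,False] + (0) * C [False,False,False] + (0) * C [False,True,False] + (0) * C [False,False,False,False] + (1) * C [False,False,True,False] + (0) * C [False,True,False,False] + (0) * C [False,True,True,False])) \<le> 10" "C [False,False,True,False] - ((0) * T + ((0) * C [True] + (0) * C [True,False] + (0) * C [False,False,False] + (0) * C [False,True,False] + (0) * C [False,False,False,False] + (1) * C [False,False,True,False] + (0) * C [False,True,False,False] + (0) * C [False,True,True,False])) \<ge> -10" using i  by linarith+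
  then show ?thesis by (simp add: t pw_def sum8 abs_le_iff)
qed

lemma key_0011:
  "\<bar>C [False,False,True,True] - (tbl [False,False,True,True] ! 0 * T + (\<Sum>i<8. tbl [False,False,True,True] ! Suc i * C (pw ! i)))\<bar> \<le> 10 \<and>
   \<bar>tbl [False,False,True,True] ! 0\<bar> \<le> 1 \<and> (\<Sum>i<8. \<bar>tbl [False,False,True,True] ! Suc i\<bar>) \<le> 7"
proof -
  have t: "tbl [False,False,True,True] = [(1), (-1), (-1), (-1), (0), (0), (-1), (0), (0)]" by (simp add: tbl_def)
  define e0 where "e0 = C [] - C [False] - C [True]"
  have b0: "0 \<le> e0 \<and> e0 \<le> 1" using R[of "[]"] unfolding e0_def by simp
  define e1 where "e1 = C [False] - C [False,False] - C [True,False]"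
  have b1: "0 \<le> e1 \<and> e1 \<le> 1" using L[of "[False]"] unfolding e1_def by simp
  define e2 where "e2 = C [False,False] - C [False,False,False] - C [False,False,True]"
  have b2: "0 \<le> e2 \<and> e2 \<le> 1" using R[of "[False,False]"] unfolding e2_def by simp
  define e3 where "e3 = C [False,False,True] - C [False,False,True,False] - C [False,False,True,True]"
  have b3: "0 \<le> e3 \<and> e3 \<le> 1" using R[of "[False,False,True]"] unfolding e3_def by simp
  have i: "C [False,False,True,True] - ((1) * T + ((-1) * C [True] + (-1) * C [True,False] + (-1) * C [False,False,False] + (0) * C [False,True,False] + (0) * C [False,False,False,False] + (-1) * C [False,False,True,False] + (0) * C [False,True,False,False] + (0) * C [False,True,True,False])) = (1) + (-1) * e0 + (-1) * e1 + (-1) * e2 + (-1) * e3" unfolding e0_def e1_def e2_def e3_def using E by (simp add: algebra_simps)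
  have l: "C [False,False,True,True] - ((1) * T + ((-1) * C [True] + (-1) * C [True,False] + (-1) * C [False,False,False] + (0) * C [False,True,False] + (0) * C [False,False,False,False] + (-1) * C [False,False,True,False] + (0) * C [False,True,False,False] + (0) * C [False,True,True,False])) \<le> 10" "C [False,False,True,True] - ((1) * T + ((-1) * C [True] + (-1) * C [True,False] + (-1) * C [False,False,False] + (0) * C [False,True,False] + (0) * C [False,False,False,False] + (-1) * C [False,False,True,False] + (0) * C [False,True,False,False] + (0) * C [False,True,True,False])) \<ge> -10" using i b0 b1 b2 b3 by linarith+
  then show ?thesis by (simp add: t pw_def sum8 abs_le_iff)
qed

lemma key_0100:
  "\<bar>C [False,True,False,False] - (tbl [False,True,False,False] ! 0 * T + (\<Sum>i<8. tbl [False,True,False,False] ! Suc i * C (pw ! i)))\<bar> \<le> 10 \<and>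
   \<bar>tbl [False,True,False,False] ! 0\<bar> \<le> 1 \<and> (\<Sum>i<8. \<bar>tbl [False,True,False,False] ! Suc i\<bar>) \<le> 7"
proof -
  have t: "tbl [False,True,False,False] = [(0), (0), (0), (0), (0), (0), (0), (1), (0)]" by (simp add: tbl_def)
  have i: "C [False,True,False,False] - ((0) * T + ((0) * C [True] + (0) * C [True,False] + (0) * C [False,False,False] + (0) * C [False,True,False] + (0) * C [False,False,False,False] + (0) * C [False,False,True,False] + (1) * C [False,True,False,False] + (0) * C [False,True,True,False])) = (0)" unfolding id_def using E by (simp add: algebra_simps)
  have l: "C [False,True,False,False] - ((0) * T + ((0) * C [True] + (0) * C [True,False] + (0) * C [False,False,False] + (0) * C [False,True,False] + (0) * C [False,False,False,False] + (0) * C [False,False,True,False] + (1) * C [False,True,False,False] + (0) * C [False,True,True,False])) \<le> 10" "C [False,True,False,False] - ((0) * T + ((0) * C [True] + (0) * C [True,False] + (0) * C [False,False,False] + (0) * C [False,True,False] + (0) * C [False,False,False,False] + (0) * C [False,False,True,False] + (1) * C [False,True,False,False] + (0) * C [False,True,True,False])) \<ge> -10" using i  by linarith+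
  then show ?thesis by (simp add: t pw_def sum8 abs_le_iff)
qed

lemma key_0101:
  "\<bar>C [False,True,False,True] - (tbl [False,True,False,True] ! 0 * T + (\<Sum>i<8. tbl [False,True,False,True] ! Suc i * C (pw ! i)))\<bar> \<le> 10 \<and>
   \<bar>tbl [False,True,False,True] ! 0\<bar> \<le> 1 \<and> (\<Sum>i<8. \<bar>tbl [False,True,False,True] ! Suc i\<bar>) \<le> 7"
proof -
  have t: "tbl [False,True,False,True] = [(0), (0), (0), (0), (1), (0), (0), (-1), (0)]" by (simp add: tbl_def)
  define e0 where "e0 = C [False,True,False] - C [False,True,False,False] - C [False,True,False,True]"
  have b0: "0 \<le> e0 \<and> e0 \<le> 1" using R[of "[False,True,False]"] unfolding e0_def by simp
  have i: "C [False,True,False,True] - ((0) * T + ((0) * C [True] + (0) * C [True,False] + (0) * C [False,False,False] + (1) * C [False,True,False] + (0) * C [False,False,False,False] + (0) * C [False,False,True,False] + (-1) * C [False,True,False,False] + (0) * C [False,True,True,False])) = (0) + (-1) * e0" unfolding e0_def using E by (simp add: algebra_simps)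
  have l: "C [False,True,False,True] - ((0) * T + ((0) * C [True] + (0) * C [True,False] + (0) * C [False,False,False] + (1) * C [False,True,False] + (0) * C [False,False,False,False] + (0) * C [False,False,True,False] + (-1) * C [False,True,False,False] + (0) * C [False,True,True,False])) \<le> 10" "C [False,True,False,True] - ((0) * T + ((0) * C [True] + (0) * C [True,False] + (0) * C [False,False,False] + (1) * C [False,True,False] + (0) * C [False,False,False,False] + (0) * C [False,False,True,False] + (-1) * C [False,True,False,False] + (0) * C [False,True,True,False])) \<ge> -10" using i b0 by linarith+
  then show ?thesis by (simp add: t pw_def sum8 abs_le_iff)
qed

lemma key_0110:
  "\<bar>C [False,True,True,False] - (tbl [False,True,True,False] ! 0 * T + (\<Sum>i<8. tbl [False,True,True,False] ! Suc i * C (pw ! i)))\<bar> \<le> 10 \<and>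
   \<bar>tbl [False,True,True,False] ! 0\<bar> \<le> 1 \<and> (\<Sum>i<8. \<bar>tbl [False,True,True,False] ! Suc i\<bar>) \<le> 7"
proof -
  have t: "tbl [False,True,True,False] = [(0), (0), (0), (0), (0), (0), (0), (0), (1)]" by (simp add: tbl_def)
  have i: "C [False,True,True,False] - ((0) * T + ((0) * C [True] + (0) * C [True,False] + (0) * C [False,False,False] + (0) * C [False,True,False] + (0) * C [False,False,False,False] + (0) * C [False,False,True,False] + (0) * C [False,True,False,False] + (1) * C [False,True,True,False])) = (0)" unfolding id_def using E by (simp add: algebra_simps)
  have l: "C [False,True,True,False] - ((0) * T + ((0) * C [True] + (0) * C [True,False] + (0) * C [False,False,False] + (0) * C [False,True,False] + (0) * C [False,False,False,False] + (0) * C [False,False,True,False] + (0) * C [False,True,False,False] + (1) * C [False,True,True,False])) \<le> 10" "C [False,True,True,False] - ((0) * T + ((0) * C [True] + (0) * C [True,False] + (0) * C [False,False,False] + (0) * C [False,True,False] + (0) * C [False,False,False,False] + (0) * C [False,False,True,False] + (0) * C [False,True,False,False] + (1) * C [False,True,True,False])) \<ge> -10" using i  by linarith+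
  then show ?thesis by (simp add: t pw_def sum8 abs_le_iff)
qed

lemma key_0111:
  "\<bar>C [False,True,True,True] - (tbl [False,True,True,True] ! 0 * T + (\<Sum>i<8. tbl [False,True,True,True] ! Suc i * C (pw ! i)))\<bar> \<le> 10 \<and>
   \<bar>tbl [False,True,True,True] ! 0\<bar> \<le> 1 \<and> (\<Sum>i<8. \<bar>tbl [False,True,True,True] ! Suc i\<bar>) \<le> 7"
proof -
  have t: "tbl [False,True,True,True] = [(0), (0), (1), (0), (-1), (0), (0), (0), (-1)]" by (simp add: tbl_def)
  define e0 where "e0 = C [False] - C [False,False] - C [False,True]"
  have b0: "0 \<le> e0 \<and> e0 \<le> 1" using R[of "[False]"] unfolding e0_def by simp
  define e1 where "e1 = C [False] - C [False,False] - C [True,False]"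
  have b1: "0 \<le> e1 \<and> e1 \<le> 1" using L[of "[False]"] unfolding e1_def by simp
  define e2 where "e2 = C [False,True] - C [False,True,False] - C [False,True,True]"
  have b2: "0 \<le> e2 \<and> e2 \<le> 1" using R[of "[False,True]"] unfolding e2_def by simp
  define e3 where "e3 = C [False,True,True] - C [False,True,True,False] - C [False,True,True,True]"
  have b3: "0 \<le> e3 \<and> e3 \<le> 1" using R[of "[False,True,True]"] unfolding e3_def by simp
  have i: "C [False,True,True,True] - ((0) * T + ((0) * C [True] + (1) * C [True,False] + (0) * C [False,False,False] + (-1) * C [False,True,False] + (0) * C [False,False,False,False] + (0) * C [False,False,True,False] + (0) * C [False,True,False,False] + (-1) * C [False,True,True,False])) = (0) + (-1) * e0 + (1) * e1 + (-1) * e2 + (-1) * e3" unfolding e0_def e1_def e2_def e3_def using E by (simp add: algebra_simps)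
  have l: "C [False,True,True,True] - ((0) * T + ((0) * C [True] + (1) * C [True,False] + (0) * C [False,False,False] + (-1) * C [False,True,False] + (0) * C [False,False,False,False] + (0) * C [False,False,True,False] + (0) * C [False,True,False,False] + (-1) * C [False,True,True,False])) \<le> 10" "C [False,True,True,True] - ((0) * T + ((0) * C [True] + (1) * C [True,False] + (0) * C [False,False,False] + (-1) * C [False,True,False] + (0) * C [False,False,False,False] + (0) * C [False,False,True,False] + (0) * C [False,True,False,False] + (-1) * C [False,True,True,False])) \<ge> -10" using i b0 b1 b2 b3 by linarith+
  then show ?thesis by (simp add: t pw_def sum8 abs_le_iff)
qed

lemma key_1000:
  "\<bar>C [True,False,False,False] - (tbl [True,False,False,False] ! 0 * T + (\<Sum>i<8. tbl [True,False,False,False] ! Suc i * C (pw ! i)))\<bar> \<le> 10 \<and>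
   \<bar>tbl [True,False,False,False] ! 0\<bar> \<le> 1 \<and> (\<Sum>i<8. \<bar>tbl [True,False,False,False] ! Suc i\<bar>) \<le> 7"
proof -
  have t: "tbl [True,False,False,False] = [(0), (0), (0), (1), (0), (-1), (0), (0), (0)]" by (simp add: tbl_def)
  define e0 where "e0 = C [False,False,False] - C [False,False,False,False] - C [True,False,False,False]"
  have b0: "0 \<le> e0 \<and> e0 \<le> 1" using L[of "[False,False,False]"] unfolding e0_def by simp
  have i: "C [True,False,False,False] - ((0) * T + ((0) * C [True] + (0) * C [True,False] + (1) * C [False,False,False] + (0) * C [False,True,False] + (-1) * C [False,False,False,False] + (0) * C [False,False,True,False] + (0) * C [False,True,False,False] + (0) * C [False,True,True,False])) = (0) + (-1) * e0" unfolding e0_def using E by (simp add: algebra_simps)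
  have l: "C [True,False,False,False] - ((0) * T + ((0) * C [True] + (0) * C [True,False] + (1) * C [False,False,False] + (0) * C [False,True,False] + (-1) * C [False,False,False,False] + (0) * C [False,False,True,False] + (0) * C [False,True,False,False] + (0) * C [False,True,True,False])) \<le> 10" "C [True,False,False,False] - ((0) * T + ((0) * C [True] + (0) * C [True,False] + (1) * C [False,False,False] + (0) * C [False,True,False] + (-1) * C [False,False,False,False] + (0) * C [False,False,True,False] + (0) * C [False,True,False,False] + (0) * C [False,True,True,False])) \<ge> -10" using i b0 by linarith+
  then show ?thesis by (simp add: t pw_def sum8 abs_le_iff)
qed

lemma key_1001:
  "\<bar>C [True,False,False,True] - (tbl [True,False,False,True] ! 0 * T + (\<Sum>i<8. tbl [True,False,False,True] ! Suc i * C (pw ! i)))\<bar> \<le> 10 \<and>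
   \<bar>tbl [True,False,False,True] ! 0\<bar> \<le> 1 \<and> (\<Sum>i<8. \<bar>tbl [True,False,False,True] ! Suc i\<bar>) \<le> 7"
proof -
  have t: "tbl [True,False,False,True] = [(1), (-1), (-1), (-2), (0), (1), (0), (0), (0)]" by (simp add: tbl_def)
  define e0 where "e0 = C [] - C [False] - C [True]"
  have b0: "0 \<le> e0 \<and> e0 \<le> 1" using R[of "[]"] unfolding e0_def by simp
  define e1 where "e1 = C [False] - C [False,False] - C [True,False]"
  have b1: "0 \<le> e1 \<and> e1 \<le> 1" using L[of "[False]"] unfolding e1_def by simp
  define e2 where "e2 = C [False,False] - C [False,False,False] - C [False,False,True]"
  have b2: "0 \<le> e2 \<and> e2 \<le> 1" using R[of "[False,False]"] unfolding e2_def by simp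
  define e3 where "e3 = C [False,False,False] - C [False,False,False,False] - C [False,False,False,True]"
  have b3: "0 \<le> e3 \<and> e3 \<le> 1" using R[of "[False,False,False]"] unfolding e3_def by simp
  define e4 where "e4 = C [False,False,True] - C [False,False,False,True] - C [True,False,False,True]"
  have b4: "0 \<le> e4 \<and> e4 \<le> 1" using L[of "[False,False,True]"] unfolding e4_def by simp
  have i: "C [True,False,False,True] - ((1) * T + ((-1) * C [True] + (-1) * C [True,False] + (-2) * C [False,False,False] + (0) * C [False,True,False] + (1) * C [False,False,False,False] + (0) * C [False,False,True,False] + (0) * C [False,True,False,False] + (0) * C [False,True,True,False])) = (1) + (-1) * e0 + (-1) * e1 + (-1) * e2 + (1) * e3 + (-1) * e4" unfolding e0_def e1_def e2_def e3_def e4_def using E by (simp add: algebra_simps)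
  have l: "C [True,False,False,True] - ((1) * T + ((-1) * C [True] + (-1) * C [True,False] + (-2) * C [False,False,False] + (0) * C [False,True,False] + (1) * C [False,False,False,False] + (0) * C [False,False,True,False] + (0) * C [False,True,False,False] + (0) * C [False,True,True,False])) \<le> 10" "C [True,False,False,True] - ((1) * T + ((-1) * C [True] + (-1) * C [True,False] + (-2) * C [False,False,False] + (0) * C [False,True,False] + (1) * C [False,False,False,False] + (0) * C [False,False,True,False] + (0) * C [False,True,False,False] + (0) * C [False,True,True,False])) \<ge> -10" using i b0 b1 b2 b3 b4 by linarith+
  then show ?thesis by (simp add: t pw_def sum8 abs_le_iff)
qed

lemma key_1010:
  "\<bar>C [True,False,True,False] - (tbl [True,False,True,False] ! 0 * T + (\<Sum>i<8. tbl [True,False,True,False] ! Suc i * C (pw ! i)))\<bar> \<le> 10 \<and>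
   \<bar>tbl [True,False,True,False] ! 0\<bar> \<le> 1 \<and> (\<Sum>i<8. \<bar>tbl [True,False,True,False] ! Suc i\<bar>) \<le> 7"
proof -
  have t: "tbl [True,False,True,False] = [(0), (0), (0), (0), (1), (0), (-1), (0), (0)]" by (simp add: tbl_def)
  define e0 where "e0 = C [False,True,False] - C [False,False,True,False] - C [True,False,True,False]"
  have b0: "0 \<le> e0 \<and> e0 \<le> 1" using L[of "[False,True,False]"] unfolding e0_def by simp
  have i: "C [True,False,True,False] - ((0) * T + ((0) * C [True] + (0) * C [True,False] + (0) * C [False,False,False] + (1) * C [False,True,False] + (0) * C [False,False,False,False] + (-1) * C [False,False,True,False] + (0) * C [False,True,False,False] + (0) * C [False,True,True,False])) = (0) + (-1) * e0" unfolding e0_def using E by (simp add: algebra_simps)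
  have l: "C [True,False,True,False] - ((0) * T + ((0) * C [True] + (0) * C [True,False] + (0) * C [False,False,False] + (1) * C [False,True,False] + (0) * C [False,False,False,False] + (-1) * C [False,False,True,False] + (0) * C [False,True,False,False] + (0) * C [False,True,True,False])) \<le> 10" "C [True,False,True,False] - ((0) * T + ((0) * C [True] + (0) * C [True,False] + (0) * C [False,False,False] + (1) * C [False,True,False] + (0) * C [False,False,False,False] + (-1) * C [False,False,True,False] + (0) * C [False,True,False,False] + (0) * C [False,True,True,False])) \<ge> -10" using i b0 by linarith+
  then show ?thesis by (simp add: t pw_def sum8 abs_le_iff)
qed

lemma key_1011:
  "\<bar>C [True,False,True,True] - (tbl [True,False,True,True] ! 0 * T + (\<Sum>i<8. tbl [True,False,True,True] ! Suc i * C (pw ! i)))\<bar> \<le> 10 \<and>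
   \<bar>tbl [True,False,True,True] ! 0\<bar> \<le> 1 \<and> (\<Sum>i<8. \<bar>tbl [True,False,True,True] ! Suc i\<bar>) \<le> 7"
proof -
  have t: "tbl [True,False,True,True] = [(-1), (1), (2), (1), (-1), (0), (1), (0), (0)]" by (simp add: tbl_def)
  define e0 where "e0 = C [] - C [False] - C [True]"
  have b0: "0 \<le> e0 \<and> e0 \<le> 1" using R[of "[]"] unfolding e0_def by simp
  define e1 where "e1 = C [False] - C [False,False] - C [False,True]"
  have b1: "0 \<le> e1 \<and> e1 \<le> 1" using R[of "[False]"] unfolding e1_def by simp
  define e2 where "e2 = C [False] - C [False,False] - C [True,False]"
  have b2: "0 \<le> e2 \<and> e2 \<le> 1" using L[of "[False]"] unfolding e2_def by simp
  define e3 where "e3 = C [False,False] - C [False,False,False] - C [False,False,True]"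
  have b3: "0 \<le> e3 \<and> e3 \<le> 1" using R[of "[False,False]"] unfolding e3_def by simp
  define e4 where "e4 = C [False,True] - C [False,True,False] - C [False,True,True]"
  have b4: "0 \<le> e4 \<and> e4 \<le> 1" using R[of "[False,True]"] unfolding e4_def by simp
  define e5 where "e5 = C [False,False,True] - C [False,False,True,False] - C [False,False,True,True]"
  have b5: "0 \<le> e5 \<and> e5 \<le> 1" using R[of "[False,False,True]"] unfolding e5_def by simp
  define e6 where "e6 = C [False,True,True] - C [False,False,True,True] - C [True,False,True,True]"
  have b6: "0 \<le> e6 \<and> e6 \<le> 1" using L[of "[False,True,True]"] unfolding e6_def by simp
  have i: "C [True,False,True,True] - ((-1) * T + ((1) * C [True] + (2) * C [True,False] + (1) * C [False,False,False] + (-1) * C [False,True,False] + (0) * C [False,False,False,False] + (1) * C [False,False,True,False] + (0) * C [False,True,False,False] + (0) * C [False,True,True,False])) = (-1) + (1) * e0 + (-1) * e1 + (2) * e2 + (1) * e3 + (-1) * e4 + (1) * e5 + (-1) * e6" unfolding e0_def e1_def e2_def e3_def e4_def e5_def e6_def using E by (simp add: algebra_simps)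
  have l: "C [True,False,True,True] - ((-1) * T + ((1) * C [True] + (2) * C [True,False] + (1) * C [False,False,False] + (-1) * C [False,True,False] + (0) * C [False,False,False,False] + (1) * C [False,False,True,False] + (0) * C [False,True,False,False] + (0) * C [False,True,True,False])) \<le> 10" "C [True,False,True,True] - ((-1) * T + ((1) * C [True] + (2) * C [True,False] + (1) * C [False,False,False] + (-1) * C [False,True,False] + (0) * C [False,False,False,False] + (1) * C [False,False,True,False] + (0) * C [False,True,False,False] + (0) * C [False,True,True,False])) \<ge> -10" using i b0 b1 b2 b3 b4 b5 b6 by linarith+
  then show ?thesis by (simp add: t pw_def sum8 abs_le_iff)
qed

lemma key_1100:
  "\<bar>C [True,True,False,False] - (tbl [True,True,False,False] ! 0 * T + (\<Sum>i<8. tbl [True,True,False,False] ! Suc i * C (pw ! i)))\<bar> \<le> 10 \<and>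
   \<bar>tbl [True,True,False,False] ! 0\<bar> \<le> 1 \<and> (\<Sum>i<8. \<bar>tbl [True,True,False,False] ! Suc i\<bar>) \<le> 7"
proof -
  have t: "tbl [True,True,False,False] = [(1), (-1), (-1), (-1), (0), (0), (0), (-1), (0)]" by (simp add: tbl_def)
  define e0 where "e0 = C [] - C [False] - C [True]"
  have b0: "0 \<le> e0 \<and> e0 \<le> 1" using R[of "[]"] unfolding e0_def by simp
  define e1 where "e1 = C [False] - C [False,False] - C [True,False]"
  have b1: "0 \<le> e1 \<and> e1 \<le> 1" using L[of "[False]"] unfolding e1_def by simp
  define e2 where "e2 = C [False,False] - C [False,False,False] - C [True,False,False]"
  have b2: "0 \<le> e2 \<and> e2 \<le> 1" using L[of "[False,False]"] unfolding e2_def by simp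
  define e3 where "e3 = C [True,False,False] - C [False,True,False,False] - C [True,True,False,False]"
  have b3: "0 \<le> e3 \<and> e3 \<le> 1" using L[of "[True,False,False]"] unfolding e3_def by simp
  have i: "C [True,True,False,False] - ((1) * T + ((-1) * C [True] + (-1) * C [True,False] + (-1) * C [False,False,False] + (0) * C [False,True,False] + (0) * C [False,False,False,False] + (0) * C [False,False,True,False] + (-1) * C [False,True,False,False] + (0) * C [False,True,True,False])) = (1) + (-1) * e0 + (-1) * e1 + (-1) * e2 + (-1) * e3" unfolding e0_def e1_def e2_def e3_def using E by (simp add: algebra_simps)
  have l: "C [True,True,False,False] - ((1) * T + ((-1) * C [True] + (-1) * C [True,False] + (-1) * C [False,False,False] + (0) * C [False,True,False] + (0) * C [False,False,False,False] + (0) * C [False,False,True,False] + (-1) * C [False,True,False,False] + (0) * C [False,True,True,False])) \<le> 10" "C [True,True,False,False] - ((1) * T + ((-1) * C [True] + (-1) * C [True,False] + (-1) * C [False,False,False] + (0) * C [False,True,False] + (0) * C [False,False,False,False] + (0) * C [False,False,True,False] + (-1) * C [False,True,False,False] + (0) * C [False,True,True,False])) \<ge> -10" using i b0 b1 b2 b3 by linarith+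
  then show ?thesis by (simp add: t pw_def sum8 abs_le_iff)
qed

lemma key_1101:
  "\<bar>C [True,True,False,True] - (tbl [True,True,False,True] ! 0 * T + (\<Sum>i<8. tbl [True,True,False,True] ! Suc i * C (pw ! i)))\<bar> \<le> 10 \<and>
   \<bar>tbl [True,True,False,True] ! 0\<bar> \<le> 1 \<and> (\<Sum>i<8. \<bar>tbl [True,True,False,True] ! Suc i\<bar>) \<le> 7"
proof -
  have t: "tbl [True,True,False,True] = [(-1), (1), (2), (1), (-1), (0), (0), (1), (0)]" by (simp add: tbl_def)
  define e0 where "e0 = C [] - C [False] - C [True]"
  have b0: "0 \<le> e0 \<and> e0 \<le> 1" using R[of "[]"] unfolding e0_def by simp
  define e1 where "e1 = C [False] - C [False,False] - C [False,True]"
  have b1: "0 \<le> e1 \<and> e1 \<le> 1" using R[of "[False]"] unfolding e1_def by simp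
  define e2 where "e2 = C [False] - C [False,False] - C [True,False]"
  have b2: "0 \<le> e2 \<and> e2 \<le> 1" using L[of "[False]"] unfolding e2_def by simp
  define e3 where "e3 = C [False,False] - C [False,False,False] - C [False,False,True]"
  have b3: "0 \<le> e3 \<and> e3 \<le> 1" using R[of "[False,False]"] unfolding e3_def by simp
  define e4 where "e4 = C [False,True] - C [False,False,True] - C [True,False,True]"
  have b4: "0 \<le> e4 \<and> e4 \<le> 1" using L[of "[False,True]"] unfolding e4_def by simp
  define e5 where "e5 = C [False,True,False] - C [False,True,False,False] - C [False,True,False,True]"
  have b5: "0 \<le> e5 \<and> e5 \<le> 1" using R[of "[False,True,False]"] unfolding e5_def by simp
  define e6 where "e6 = C [True,False,True] - C [False,True,False,True] - C [True,True,False,True]"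
  have b6: "0 \<le> e6 \<and> e6 \<le> 1" using L[of "[True,False,True]"] unfolding e6_def by simp
  have i: "C [True,True,False,True] - ((-1) * T + ((1) * C [True] + (2) * C [True,False] + (1) * C [False,False,False] + (-1) * C [False,True,False] + (0) * C [False,False,False,False] + (0) * C [False,False,True,False] + (1) * C [False,True,False,False] + (0) * C [False,True,True,False])) = (-1) + (1) * e0 + (-1) * e1 + (2) * e2 + (1) * e3 + (-1) * e4 + (1) * e5 + (-1) * e6" unfolding e0_def e1_def e2_def e3_def e4_def e5_def e6_def using E by (simp add: algebra_simps)
  have l: "C [True,True,False,True] - ((-1) * T + ((1) * C [True] + (2) * C [True,False] + (1) * C [False,False,False] + (-1) * C [False,True,False] + (0) * C [False,False,False,False] + (0) * C [False,False,True,False] + (1) * C [False,True,False,False] + (0) * C [False,True,True,False])) \<le> 10" "C [True,True,False,True] - ((-1) * T + ((1) * C [True] + (2) * C [True,False] + (1) * C [False,False,False] + (-1) * C [False,True,False] + (0) * C [False,False,False,False] + (0) * C [False,False,True,False] + (1) * C [False,True,False,False] + (0) * C [False,True,True,False])) \<ge> -10" using i b0 b1 b2 b3 b4 b5 b6 by linarith+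
  then show ?thesis by (simp add: t pw_def sum8 abs_le_iff)
qed

lemma key_1110:
  "\<bar>C [True,True,True,False] - (tbl [True,True,True,False] ! 0 * T + (\<Sum>i<8. tbl [True,True,True,False] ! Suc i * C (pw ! i)))\<bar> \<le> 10 \<and>
   \<bar>tbl [True,True,True,False] ! 0\<bar> \<le> 1 \<and> (\<Sum>i<8. \<bar>tbl [True,True,True,False] ! Suc i\<bar>) \<le> 7"
proof -
  have t: "tbl [True,True,True,False] = [(0), (0), (1), (0), (-1), (0), (0), (0), (-1)]" by (simp add: tbl_def)
  define e0 where "e0 = C [True,False] - C [False,True,False] - C [True,True,False]"
  have b0: "0 \<le> e0 \<and> e0 \<le> 1" using L[of "[True,False]"] unfolding e0_def by simp
  define e1 where "e1 = C [True,True,False] - C [False,True,True,False] - C [True,True,True,False]"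
  have b1: "0 \<le> e1 \<and> e1 \<le> 1" using L[of "[True,True,False]"] unfolding e1_def by simp
  have i: "C [True,True,True,False] - ((0) * T + ((0) * C [True] + (1) * C [True,False] + (0) * C [False,False,False] + (-1) * C [False,True,False] + (0) * C [False,False,False,False] + (0) * C [False,False,True,False] + (0) * C [False,True,False,False] + (-1) * C [False,True,True,False])) = (0) + (-1) * e0 + (-1) * e1" unfolding e0_def e1_def using E by (simp add: algebra_simps)
  have l: "C [True,True,True,False] - ((0) * T + ((0) * C [True] + (1) * C [True,False] + (0) * C [False,False,False] + (-1) * C [False,True,False] + (0) * C [False,False,False,False] + (0) * C [False,False,True,False] + (0) * C [False,True,False,False] + (-1) * C [False,True,True,False])) \<le> 10" "C [True,True,True,False] - ((0) * T + ((0) * C [True] + (1) * C [True,False] + (0) * C [False,False,False] + (-1) * C [False,True,False] + (0) * C [False,False,False,False] + (0) * C [False,False,True,False] + (0) * C [False,True,False,False] + (-1) * C [False,True,True,False])) \<ge> -10" using i b0 b1 by linarith+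
  then show ?thesis by (simp add: t pw_def sum8 abs_le_iff)
qed

lemma key_1111:
  "\<bar>C [True,True,True,True] - (tbl [True,True,True,True] ! 0 * T + (\<Sum>i<8. tbl [True,True,True,True] ! Suc i * C (pw ! i)))\<bar> \<le> 10 \<and>
   \<bar>tbl [True,True,True,True] ! 0\<bar> \<le> 1 \<and> (\<Sum>i<8. \<bar>tbl [True,True,True,True] ! Suc i\<bar>) \<le> 7"
proof -
  have t: "tbl [True,True,True,True] = [(0), (1), (-3), (0), (2), (0), (0), (0), (1)]" by (simp add: tbl_def)
  define e0 where "e0 = C [True] - C [True,False] - C [True,True]"
  have b0: "0 \<le> e0 \<and> e0 \<le> 1" using R[of "[True]"] unfolding e0_def by simp
  define e1 where "e1 = C [True,False] - C [False,True,False] - C [True,True,False]"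
  have b1: "0 \<le> e1 \<and> e1 \<le> 1" using L[of "[True,False]"] unfolding e1_def by simp
  define e2 where "e2 = C [True,True] - C [True,True,False] - C [True,True,True]"
  have b2: "0 \<le> e2 \<and> e2 \<le> 1" using R[of "[True,True]"] unfolding e2_def by simp
  define e3 where "e3 = C [True,True,False] - C [False,True,True,False] - C [True,True,True,False]"
  have b3: "0 \<le> e3 \<and> e3 \<le> 1" using L[of "[True,True,False]"] unfolding e3_def by simp
  define e4 where "e4 = C [True,True,True] - C [True,True,True,False] - C [True,True,True,True]"
  have b4: "0 \<le> e4 \<and> e4 \<le> 1" using R[of "[True,True,True]"] unfolding e4_def by simp
  have i: "C [True,True,True,True] - ((0) * T + ((1) * C [True] + (-3) * C [True,False] + (0) * C [False,False,False] + (2) * C [False,True,False] + (0) * C [False,False,False,False] + (0) * C [False,False,True,False] + (0) * C [False,True,False,False] + (1) * C [False,True,True,False])) = (0) + (-1) * e0 + (2) * e1 + (-1) * e2 + (1) * e3 + (-1) * e4" unfolding e0_def e1_def e2_def e3_def e4_def using E by (simp add: algebra_simps)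
  have l: "C [True,True,True,True] - ((0) * T + ((1) * C [True] + (-3) * C [True,False] + (0) * C [False,False,False] + (2) * C [False,True,False] + (0) * C [False,False,False,False] + (0) * C [False,False,True,False] + (0) * C [False,True,False,False] + (1) * C [False,True,True,False])) \<le> 10" "C [True,True,True,True] - ((0) * T + ((1) * C [True] + (-3) * C [True,False] + (0) * C [False,False,False] + (2) * C [False,True,False] + (0) * C [False,False,False,False] + (0) * C [False,False,True,False] + (0) * C [False,True,False,False] + (1) * C [False,True,True,False])) \<ge> -10" using i b0 b1 b2 b3 b4 by linarith+
  then show ?thesis by (simp add: t pw_def sum8 abs_le_iff)
qed

lemma key:
  assumes "length w = 4"
  shows "\<bar>C w - (tbl w ! 0 * T + (\<Sum>i<8. tbl w ! Suc i * C (pw ! i)))\<bar> \<le> 10 \<and>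
   \<bar>tbl w ! 0\<bar> \<le> 1 \<and> (\<Sum>i<8. \<bar>tbl w ! Suc i\<bar>) \<le> 7"
proof -
  obtain a b c d where w: "w = [a, b, c, d]"
    using assms by (auto simp: length_Suc_conv numeral_eq_Suc)
  show ?thesis unfolding w
    by (cases a; cases b; cases c; cases d) (simp_all only: key_0000 key_0001 key_0010 key_0011
      key_0100 key_0101 key_0110 key_0111 key_1000 key_1001 key_1010 key_1011
      key_1100 key_1101 key_1110 key_1111)
qed

end

lemma term_bound:
  fixes T Ci Di :: real
  assumes "T \<ge> 7" "0 \<le> Ci" "Ci \<le> Di" "T - 3 \<le> Di" "Di \<le> T"
  shows "\<bar>Ci / (T - 3) - Ci / Di\<bar> \<le> 3 / (T - 3)"
proof -
  have pos: "T - 3 > 0" "Di > 0" using assms by auto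
  have eq: "Ci / (T - 3) - Ci / Di = (Ci / Di) * ((Di - (T - 3)) / (T - 3))"
  proof -
    have "(Ci / Di) * ((Di - (T - 3)) / (T - 3)) = (Ci / Di) * (Di / (T - 3)) - (Ci / Di) * ((T - 3) / (T - 3))"
      by (simp add: diff_divide_distrib right_diff_distrib)
    also have "(Ci / Di) * (Di / (T - 3)) = Ci / (T - 3)" using pos by simp
    also have "(Ci / Di) * ((T - 3) / (T - 3)) = Ci / Di" using pos by simp
    finally show ?thesis by simp
  qed
  have a: "0 \<le> Ci / Di" "Ci / Di \<le> 1" using assms pos by auto
  have b: "0 \<le> (Di - (T - 3)) / (T - 3)" "(Di - (T - 3)) / (T - 3) \<le> 3 / (T - 3)"
    using assms pos by (auto intro: divide_right_mono)
  have u: "(Ci / Di) * ((Di - (T - 3)) / (T - 3)) \<le> 1 * (3 / (T - 3))"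
    using a b by (intro mult_mono) auto
  have n: "0 \<le> (Ci / Di) * ((Di - (T - 3)) / (T - 3))" using a b by (intro mult_nonneg_nonneg)
  show ?thesis unfolding eq abs_of_nonneg[OF n] using u by simp
qed

lemma norm_bound:
  fixes T Cw \<alpha> :: real and \<beta> Ci Di p :: "nat \<Rightarrow> real"
  assumes T: "T \<ge> 7" and main: "\<bar>Cw - (\<alpha> * T + (\<Sum>i<8. \<beta> i * Ci i))\<bar> \<le> 10"
    and al: "\<bar>\<alpha>\<bar> \<le> 1" and be: "(\<Sum>i<8. \<bar>\<beta> i\<bar>) \<le> 7"
    and P: "\<And>i. i < 8 \<Longrightarrow> 0 \<le> Ci i \<and> Ci i \<le> Di i \<and> T - 3 \<le> Di i \<and> Di i \<le> T \<and> p i = Ci i / Di i"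
  shows "\<bar>Cw / (T - 3) - (\<alpha> + (\<Sum>i<8. \<beta> i * p i))\<bar> \<le> 68 / (T + 1)"
proof -
  have pos: "T - 3 > 0" using T by auto
  have t: "\<bar>\<beta> i * Ci i / (T - 3) - \<beta> i * p i\<bar> \<le> \<bar>\<beta> i\<bar> * (3 / (T - 3))" if "i < 8" for i
  proof -
    have "\<beta> i * Ci i / (T - 3) - \<beta> i * p i = \<beta> i * (Ci i / (T - 3) - Ci i / Di i)"
      using P[OF that] by (simp add: algebra_simps)
    also have "\<bar>\<dots>\<bar> = \<bar>\<beta> i\<bar> * \<bar>Ci i / (T - 3) - Ci i / Di i\<bar>" by (simp add: abs_mult)
    also have "\<dots> \<le> \<bar>\<beta> i\<bar> * (3 / (T - 3))"
      using P[OF that] T by (intro mult_left_mono term_bound) auto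
    finally show ?thesis .
  qed
  have S: "\<bar>(\<Sum>i<8. \<beta> i * Ci i / (T - 3)) - (\<Sum>i<8. \<beta> i * p i)\<bar> \<le> 21 / (T - 3)"
  proof -
    have "\<bar>(\<Sum>i<8. \<beta> i * Ci i / (T - 3)) - (\<Sum>i<8. \<beta> i * p i)\<bar>
        = \<bar>\<Sum>i<8. (\<beta> i * Ci i / (T - 3) - \<beta> i * p i)\<bar>" by (simp add: sum_subtractf)
    also have "\<dots> \<le> (\<Sum>i<8. \<bar>\<beta> i * Ci i / (T - 3) - \<beta> i * p i\<bar>)" by (rule sum_abs)
    also have "\<dots> \<le> (\<Sum>i<8. \<bar>\<beta> i\<bar> * (3 / (T - 3)))" by (intro sum_mono t) auto
    also have "\<dots> = (\<Sum>i<8. \<bar>\<beta> i\<bar>) * (3 / (T - 3))" by (rule sum_distrib_right[symmetric])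
    also have "\<dots> \<le> 7 * (3 / (T - 3))" using be pos by (intro mult_right_mono) auto
    finally show ?thesis by simp
  qed
  have s1: "(\<Sum>i<8. \<beta> i * Ci i / (T - 3)) = (\<Sum>i<8. \<beta> i * Ci i) / (T - 3)"
    by (simp add: sum_divide_distrib)
  have eq00: "Cw / U - (\<alpha> + Q)
      = (Cw - (\<alpha> * (U + 3) + S)) / U + 3 * \<alpha> / U + (S / U - Q)" if "U > 0" for S Q U
  proof -
    have "(Cw - (\<alpha> * (U + 3) + S)) / U = Cw / U - \<alpha> * (U + 3) / U - S / U"
      by (simp add: diff_divide_distrib add_divide_distrib)
    moreover have "\<alpha> * (U + 3) / U = \<alpha> + 3 * \<alpha> / U" using that
      by (simp add: distrib_left add_divide_distrib)
    ultimately show ?thesis by simp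
  qed
  have eq0: "Cw / (T - 3) - (\<alpha> + Q)
      = (Cw - (\<alpha> * T + S)) / (T - 3) + 3 * \<alpha> / (T - 3) + (S / (T - 3) - Q)" for S Q
    using eq00[OF pos, of Q S] by simp
  have eq: "Cw / (T - 3) - (\<alpha> + (\<Sum>i<8. \<beta> i * p i))
      = (Cw - (\<alpha> * T + (\<Sum>i<8. \<beta> i * Ci i))) / (T - 3) + 3 * \<alpha> / (T - 3)
        + ((\<Sum>i<8. \<beta> i * Ci i / (T - 3)) - (\<Sum>i<8. \<beta> i * p i))"
    unfolding s1 by (rule eq0)
  have A: "\<bar>(Cw - (\<alpha> * T + (\<Sum>i<8. \<beta> i * Ci i))) / (T - 3)\<bar> \<le> 10 / (T - 3)"
  proof -
    have "\<bar>(Cw - (\<alpha> * T + (\<Sum>i<8. \<beta> i * Ci i))) / (T - 3)\<bar>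
        = \<bar>Cw - (\<alpha> * T + (\<Sum>i<8. \<beta> i * Ci i))\<bar> / (T - 3)"
      using pos by (simp add: abs_divide)
    also have "\<dots> \<le> 10 / (T - 3)" using main pos by (intro divide_right_mono) auto
    finally show ?thesis .
  qed
  have B: "\<bar>3 * \<alpha> / (T - 3)\<bar> \<le> 3 / (T - 3)"
  proof -
    have "\<bar>3 * \<alpha> / (T - 3)\<bar> = (3 * \<bar>\<alpha>\<bar>) / (T - 3)"
      using pos by (simp add: abs_divide abs_mult)
    also have "\<dots> \<le> 3 / (T - 3)" using al pos by (intro divide_right_mono) auto
    finally show ?thesis .
  qed
  have fin: "\<bar>Cw / (T - 3) - (\<alpha> + (\<Sum>i<8. \<beta> i * p i))\<bar> \<le> 10 / (T - 3) + 3 / (T - 3) + 21 / (T - 3)"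
    unfolding eq using A B S abs_triangle_ineq[of "(Cw - (\<alpha> * T + (\<Sum>i<8. \<beta> i * Ci i))) / (T - 3) + 3 * \<alpha> / (T - 3)"
        "(\<Sum>i<8. \<beta> i * Ci i / (T - 3)) - (\<Sum>i<8. \<beta> i * p i)"]
      abs_triangle_ineq[of "(Cw - (\<alpha> * T + (\<Sum>i<8. \<beta> i * Ci i))) / (T - 3)" "3 * \<alpha> / (T - 3)"]
    by linarith
  have s34: "10 / (T - 3) + 3 / (T - 3) + 21 / (T - 3) = 68 / (2 * T - 6)"
  proof -
    have "10 / (T - 3) + 3 / (T - 3) + 21 / (T - 3) = (10 + 3 + 21) / (T - 3)"
      by (simp only: add_divide_distrib)
    also have "\<dots> = 68 / (2 * T - 6)"
    proof -
      have "2 * T - 6 \<noteq> 0" "T - 3 \<noteq> 0" using pos by auto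
      then show ?thesis by (simp add: divide_eq_eq eq_divide_eq)
    qed
    finally show ?thesis .
  qed
  have "68 / (2 * T - 6) \<le> 68 / (T + 1)"
    using T by (intro frac_le) auto
  then show ?thesis using fin s34 by linarith
qed

lemma small_bound:
  fixes x \<alpha> :: real and \<beta> p :: "nat \<Rightarrow> real"
  assumes "\<bar>x\<bar> \<le> 1" "\<bar>\<alpha>\<bar> \<le> 1" "(\<Sum>i<8. \<bar>\<beta> i\<bar>) \<le> 7" "\<And>i. i < 8 \<Longrightarrow> \<bar>p i\<bar> \<le> 1"
  shows "\<bar>x - (\<alpha> + (\<Sum>i<8. \<beta> i * p i))\<bar> \<le> 9"
proof -
  have "\<bar>\<Sum>i<8. \<beta> i * p i\<bar> \<le> (\<Sum>i<8. \<bar>\<beta> i * p i\<bar>)" by (rule sum_abs)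
  also have "\<dots> \<le> (\<Sum>i<8. \<bar>\<beta> i\<bar>)"
  proof (intro sum_mono)
    fix i assume "i \<in> {..<(8::nat)}"
    then have "\<bar>p i\<bar> \<le> 1" using assms(4) by auto
    then show "\<bar>\<beta> i * p i\<bar> \<le> \<bar>\<beta> i\<bar>"
      by (simp add: abs_mult mult_left_le)
  qed
  finally have "\<bar>\<Sum>i<8. \<beta> i * p i\<bar> \<le> 7" using assms(3) by linarith
  then show ?thesis using assms(1,2) by linarith
qed

lemma less8: "i < (8::nat) \<Longrightarrow> i = 0 \<or> i = 1 \<or> i = 2 \<or> i = 3 \<or> i = 4 \<or> i = 5 \<or> i = 6 \<or> i = 7"
  by presburger

lemma nu_bounds:
  assumes "w \<noteq> []"
  shows "0 \<le> nu xs w \<and> nu xs w \<le> 1"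
proof (cases "length w \<le> length xs")
  case True
  have c: "real (cnt w xs) + real (length w) \<le> real (length xs) + 1"
    using cnt_le[OF True] by linarith
  have d: "real (length xs) - real (length w) + 1 > 0" using True by simp
  show ?thesis unfolding nu_cnt[OF True assms] using c d by simp
next
  case False
  then show ?thesis by (simp add: nu_small)
qed

lemma rho_bounds: "0 \<le> rho xs \<and> rho xs \<le> 1"
proof (cases "length xs = 0")
  case True
  then show ?thesis by (simp add: rho_cnt)
next
  case False
  then have "length [True] \<le> length xs" by (cases xs) auto
  from cnt_le[OF this] have "real (cnt [True] xs) \<le> real (length xs)" by simp
  then show ?thesis using False by (simp add: rho_cnt)
qed

lemma q_bounds:
  assumes "m = cnt [True, False] xs"
  shows "0 \<le> real m / real (length xs) \<and> real m / real (length xs) \<le> 1"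
proof (cases "length xs < 2")
  case True
  then have "m = 0" using assms cnt_long[of xs "[True, False]"] by simp
  then show ?thesis by simp
next
  case False
  then have "length [True, False] \<le> length xs" by simp
  from cnt_le[OF this] assms have "real m \<le> real (length xs)" by simp
  then show ?thesis using False by (auto simp: divide_le_eq_1)
qed

lemma params_bounds:
  assumes "m = cnt [True, False] xs" "i < 8"
  shows "\<bar>params xs m ! i\<bar> \<le> 1"
proof -
  have n: "\<bar>nu xs w\<bar> \<le> 1" if "w \<noteq> []" for w using nu_bounds[OF that, of xs] by auto
  have r: "\<bar>rho xs\<bar> \<le> 1" using rho_bounds[of xs] by auto
  have q: "\<bar>real m / real (length xs)\<bar> \<le> 1" using q_bounds[OF assms(1)] by auto
  from less8[OF assms(2)] show ?thesis
    apply (elim disjE)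
    subgoal using r by (simp add: params_def)
    subgoal using q by (simp add: params_def)
    subgoal using n[of "[False,False,False]"] by (simp add: params_def)
    subgoal using n[of "[False,True,False]"] by (simp add: params_def)
    subgoal using n[of "[False,False,False,False]"] by (simp add: params_def)
    subgoal using n[of "[False,False,True,False]"] by (simp add: params_def)
    subgoal using n[of "[False,True,False,False]"] by (simp add: params_def)
    subgoal using n[of "[False,True,True,False]"] by (simp add: params_def)
    done
qed

theorem proposition3p3:
  shows "\<exists>(a :: bool list \<Rightarrow> real) (b :: bool list \<Rightarrow> nat \<Rightarrow> real) (\<epsilon> :: nat \<Rightarrow> real).
     \<epsilon> \<longlonglongrightarrow> 0 \<and>
     (\<forall>m L G xs. (\<forall>i<m. 1 \<le> L i \<and> 1 \<le> G i) \<longrightarrow> xs = block_seq m L G \<longrightarrow>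
        (\<forall>w. length w = 4 \<longrightarrow>
           \<bar>nu xs w - (a w + (\<Sum>i<8. b w i * params xs m ! i))\<bar> \<le> \<epsilon> (length xs)))"
proof (intro exI conjI)
  show "(\<lambda>n. 68 / real (Suc n)) \<longlonglongrightarrow> 0"
  proof -
    have "(\<lambda>n. 68 * inverse (real (Suc n))) \<longlonglongrightarrow> 68 * 0"
      by (intro tendsto_mult tendsto_const LIMSEQ_inverse_real_of_nat)
    then show ?thesis by (simp add: divide_inverse)
  qed
  show "\<forall>m L G xs. (\<forall>i<m. 1 \<le> L i \<and> 1 \<le> G i) \<longrightarrow> xs = block_seq m L G \<longrightarrow>
        (\<forall>w. length w = 4 \<longrightarrow>
           \<bar>nu xs w - (tbl w ! 0 + (\<Sum>i<8. tbl w ! Suc i * params xs m ! i))\<bar>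
             \<le> 68 / real (Suc (length xs)))"
  proof (intro allI impI)
    fix m L G xs and w :: "bool list"
    assume hLG: "\<forall>i<m. 1 \<le> L i \<and> 1 \<le> G i" and xs: "xs = block_seq m L G" and lw: "length w = (4::nat)"
    define T where "T = length xs"
    define C where "C u = real (cnt u xs)" for u
    have m: "m = cnt [True, False] xs" using cnt_block[OF hLG] xs by simp
    have R: "C (u @ [False]) + C (u @ [True]) \<le> C u \<and> C u \<le> C (u @ [False]) + C (u @ [True]) + 1" for u
      using cnt_R[of u xs] unfolding C_def by (auto split: if_splits)
    have L: "C (False # u) + C (True # u) \<le> C u \<and> C u \<le> C (False # u) + C (True # u) + 1" for u
      using cnt_L[of u xs] unfolding C_def by (auto split: if_splits)
    have E: "C [] = real T + 1" unfolding C_def T_def by (simp add: cnt_Nil_word)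
    have K: "\<bar>C w - (tbl w ! 0 * real T + (\<Sum>i<8. tbl w ! Suc i * C (pw ! i)))\<bar> \<le> 10 \<and>
      \<bar>tbl w ! 0\<bar> \<le> 1 \<and> (\<Sum>i<8. \<bar>tbl w ! Suc i\<bar>) \<le> 7"
      by (rule key[of C "real T", OF R L E lw])
    have wne: "w \<noteq> []" using lw by auto
    show "\<bar>nu xs w - (tbl w ! 0 + (\<Sum>i<8. tbl w ! Suc i * params xs m ! i))\<bar>
             \<le> 68 / real (Suc (length xs))"
    proof (cases "T \<ge> 7")
      case True
      define D where "D i = [real T, real T, real T - 2, real T - 2, real T - 3, real T - 3, real T - 3, real T - 3] ! i" for i
      have cle: "C u \<le> real T + 1 - real (length u)" if "length u \<le> T" for u
        using cnt_le[of u xs] that unfolding C_def T_def by simp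
      have nuC: "nu xs u = C u / (real T - real (length u) + 1)" if "length u \<le> T" "u \<noteq> []" for u
        using nu_cnt[of u xs] that unfolding C_def T_def by simp
      have P: "0 \<le> C (pw ! i) \<and> C (pw ! i) \<le> D i \<and> real T - 3 \<le> D i \<and> D i \<le> real T
               \<and> params xs m ! i = C (pw ! i) / D i" if "i < 8" for i
      proof -
        have c0: "C u \<ge> 0" for u unfolding C_def by simp
        have T7: "real T \<ge> 7" using True by simp
        have p0: "params xs m ! 0 = C [True] / real T" by (simp add: params_def rho_cnt C_def T_def)
        have p1: "params xs m ! 1 = C [True, False] / real T" by (simp add: params_def m C_def T_def)
        have l0: "C [True] \<le> real T + 1 - 1" using cle[of "[True]"] True by simp
        have Q0: "0 \<le> C (pw ! 0) \<and> C (pw ! 0) \<le> D 0 \<and> real T - 3 \<le> D 0 \<and> D 0 \<le> real T \<and> params xs m ! 0 = C (pw ! 0) / D 0"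
          unfolding D_def pw_def using c0[of "[True]"] l0 p0 T7 by simp
        have l1: "C [True, False] \<le> real T + 1 - 2" using cle[of "[True, False]"] True by simp
        have Q1: "0 \<le> C (pw ! 1) \<and> C (pw ! 1) \<le> D 1 \<and> real T - 3 \<le> D 1 \<and> D 1 \<le> real T \<and> params xs m ! 1 = C (pw ! 1) / D 1"
          unfolding D_def pw_def using c0[of "[True, False]"] l1 p1 T7 by simp
        have l2: "C [False,False,False] \<le> real T + 1 - 3" using cle[of "[False,False,False]"] True by simp
        have p2: "params xs m ! 2 = C [False,False,False] / (real T - 2)" using nuC[of "[False,False,False]"] True by (simp add: params_def)
        have Q2: "0 \<le> C (pw ! 2) \<and> C (pw ! 2) \<le> D 2 \<and> real T - 3 \<le> D 2 \<and> D 2 \<le> real T \<and> params xs m ! 2 = C (pw ! 2) / D 2"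
          unfolding D_def pw_def using c0[of "[False,False,False]"] l2 p2 T7 by simp
        have l3: "C [False,True,False] \<le> real T + 1 - 3" using cle[of "[False,True,False]"] True by simp
        have p3: "params xs m ! 3 = C [False,True,False] / (real T - 2)" using nuC[of "[False,True,False]"] True by (simp add: params_def)
        have Q3: "0 \<le> C (pw ! 3) \<and> C (pw ! 3) \<le> D 3 \<and> real T - 3 \<le> D 3 \<and> D 3 \<le> real T \<and> params xs m ! 3 = C (pw ! 3) / D 3"
          unfolding D_def pw_def using c0[of "[False,True,False]"] l3 p3 T7 by simp
        have l4: "C [False,False,False,False] \<le> real T + 1 - 4" using cle[of "[False,False,False,False]"] True by simp
        have p4: "params xs m ! 4 = C [False,False,False,False] / (real T - 3)" using nuC[of "[False,False,False,False]"] True by (simp add: params_def)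
        have Q4: "0 \<le> C (pw ! 4) \<and> C (pw ! 4) \<le> D 4 \<and> real T - 3 \<le> D 4 \<and> D 4 \<le> real T \<and> params xs m ! 4 = C (pw ! 4) / D 4"
          unfolding D_def pw_def using c0[of "[False,False,False,False]"] l4 p4 T7 by simp
        have l5: "C [False,False,True,False] \<le> real T + 1 - 4" using cle[of "[False,False,True,False]"] True by simp
        have p5: "params xs m ! 5 = C [False,False,True,False] / (real T - 3)" using nuC[of "[False,False,True,False]"] True by (simp add: params_def)
        have Q5: "0 \<le> C (pw ! 5) \<and> C (pw ! 5) \<le> D 5 \<and> real T - 3 \<le> D 5 \<and> D 5 \<le> real T \<and> params xs m ! 5 = C (pw ! 5) / D 5"
          unfolding D_def pw_def using c0[of "[False,False,True,False]"] l5 p5 T7 by simp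
        have l6: "C [False,True,False,False] \<le> real T + 1 - 4" using cle[of "[False,True,False,False]"] True by simp
        have p6: "params xs m ! 6 = C [False,True,False,False] / (real T - 3)" using nuC[of "[False,True,False,False]"] True by (simp add: params_def)
        have Q6: "0 \<le> C (pw ! 6) \<and> C (pw ! 6) \<le> D 6 \<and> real T - 3 \<le> D 6 \<and> D 6 \<le> real T \<and> params xs m ! 6 = C (pw ! 6) / D 6"
          unfolding D_def pw_def using c0[of "[False,True,False,False]"] l6 p6 T7 by simp
        have l7: "C [False,True,True,False] \<le> real T + 1 - 4" using cle[of "[False,True,True,False]"] True by simp
        have p7: "params xs m ! 7 = C [False,True,True,False] / (real T - 3)" using nuC[of "[False,True,True,False]"] True by (simp add: params_def)
        have Q7: "0 \<le> C (pw ! 7) \<and> C (pw ! 7) \<le> D 7 \<and> real T - 3 \<le> D 7 \<and> D 7 \<le> real T \<and> params xs m ! 7 = C (pw ! 7) / D 7"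
          unfolding D_def pw_def using c0[of "[False,True,True,False]"] l7 p7 T7 by simp
        from less8[OF that] show ?thesis
          apply (elim disjE)
          subgoal using Q0 by simp
          subgoal using Q1 by simp
          subgoal using Q2 by simp
          subgoal using Q3 by simp
          subgoal using Q4 by simp
          subgoal using Q5 by simp
          subgoal using Q6 by simp
          subgoal using Q7 by simp
          done
      qed
      have nw: "nu xs w = C w / (real T - 3)" using nuC[of w] lw True wne by simp
      have "\<bar>C w / (real T - 3) - (tbl w ! 0 + (\<Sum>i<8. tbl w ! Suc i * params xs m ! i))\<bar>
            \<le> 68 / (real T + 1)"
        apply (rule norm_bound[where Ci = "\<lambda>i. C (pw ! i)" and Di = D])
        subgoal using True by simp
        subgoal using K by blast
        subgoal using K by blast
        subgoal using K by blast
        subgoal by (rule P)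
        done
      then show ?thesis unfolding nw T_def by (simp add: add.commute)
    next
      case False
      have "\<bar>nu xs w - (tbl w ! 0 + (\<Sum>i<8. tbl w ! Suc i * params xs m ! i))\<bar> \<le> 9"
        apply (rule small_bound)
        subgoal using nu_bounds[OF wne, of xs] by auto
        subgoal using K by blast
        subgoal using K by blast
        subgoal by (rule params_bounds[OF m])
        done
      moreover have "9 \<le> 68 / real (Suc (length xs))"
        using False unfolding T_def by (simp add: field_simps)
      ultimately show ?thesis by linarith
    qed
  qed
qed

end
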